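(* $$\max_{U_1,U_2\in\mathcal R}P(U_1,U_2)=\frac{3}{50}\left(9+\sqrt6\right)=0.004\left(\sqrt{393-48\sqrt6}+138+7\sqrt6\right)\approx 0.687.$$
   Context: Basis of $\mathbb C^3$: $|1\rangle,|2\rangle,|3\rangle$ (standard basis). Spin-1 matrices in this basis: $J_y=\frac{1}{\sqrt2}\begin{pmatrix}0&-i&0\\ i&0&-i\\ 0&i&0\end{pmatrix}$, $J_z=\mathrm{diag}(1,0,-1)$. Define $Z(\alpha,\beta,\gamma)=e^{-i\alpha J_z}e^{-i\beta J_y}e^{-i\gamma J_z}$. Let $\mathcal R=\{Z(\alpha,\beta,\gamma):\alpha,\beta,\gamma\in\mathbb R\}\subset U(3)$. For $j\in\{1,2\}$ let $P_j=|j\rangle\langle j|$ and $\mathcal M_j(\rho)=P_j\rho P_j+(\mathbb I-P_j)\rho(\mathbb I-P_j)$. Define $P(U_1,U_2)=\langle 2|U_2\,\mathcal M_1(U_1|1\rangle\langle 1|U_1^\dagger)\,U_2^\dagger|2\rangle$ for $U_1,U_2\in\mathcal R$. *)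

theory Defs
  imports "HOL-Analysis.Analysis"
begin

type_synonym cmat3 = "complex^3^3"
type_synonym cvec3 = "complex^3"

primrec mpow :: "cmat3 \<Rightarrow> nat \<Rightarrow> cmat3" where
  "mpow A 0 = mat 1"
| "mpow A (Suc n) = A ** mpow A n"

definition mexp :: "cmat3 \<Rightarrow> cmat3" where
  "mexp A = (\<Sum>n. (1 / fact n) *\<^sub>R mpow A n)"

definition cadj :: "cmat3 \<Rightarrow> cmat3" where
  "cadj A = (\<chi> i j. cnj (A $ j $ i))"

text \<open>Spin-1 matrices in the standard basis |1>,|2>,|3> (indices 1,2,3 of type 3).\<close>
definition Jy :: cmat3 where
  "Jy = (\<chi> i j. (1 / complex_of_real (sqrt 2)) *
      (if i = 1 \<and> j = 2 then - \<i>
       else if i = 2 \<and> j = 1 then \<i>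
       else if i = 2 \<and> j = 3 then - \<i>
       else if i = 3 \<and> j = 2 then \<i>
       else 0))"

definition Jz :: cmat3 where
  "Jz = (\<chi> i j. if i = j then (if i = 1 then 1 else if i = 2 then 0 else -1) else 0)"

definition cscale :: "complex \<Rightarrow> cmat3 \<Rightarrow> cmat3" where
  "cscale c A = (\<chi> i j. c * A $ i $ j)"

definition Zrot :: "real \<Rightarrow> real \<Rightarrow> real \<Rightarrow> cmat3" where
  "Zrot \<alpha> \<beta> \<gamma> = mexp (cscale (- \<i> * complex_of_real \<alpha>) Jz)
                 ** mexp (cscale (- \<i> * complex_of_real \<beta>) Jy)
                 ** mexp (cscale (- \<i> * complex_of_real \<gamma>) Jz)"

definition Rset :: "cmat3 set" where
  "Rset = {Zrot \<alpha> \<beta> \<gamma> | \<alpha> \<beta> \<gamma>. True}"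

definition ket :: "3 \<Rightarrow> cvec3" where
  "ket j = (\<chi> i. if i = j then 1 else 0)"

definition proj :: "3 \<Rightarrow> cmat3" where
  "proj j = (\<chi> a b. ket j $ a * cnj (ket j $ b))"

definition meas :: "3 \<Rightarrow> cmat3 \<Rightarrow> cmat3" where
  "meas j \<rho> = proj j ** \<rho> ** proj j + (mat 1 - proj j) ** \<rho> ** (mat 1 - proj j)"

definition Pprob :: "cmat3 \<Rightarrow> cmat3 \<Rightarrow> complex" where
  "Pprob U1 U2 = (U2 ** meas 1 (U1 ** proj 1 ** cadj U1) ** cadj U2) $ 2 $ 2"

end

theory Submission
  imports Defs
begin

lemma three_ne[simp]: "(1::3) \<noteq> 2" "(1::3) \<noteq> 3" "(2::3) \<noteq> 3" "(2::3) \<noteq> 1" "(3::3) \<noteq> 1" "(3::3) \<noteq> 2"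
  by simp_all

lemma proj1_eq: "proj 1 = (\<chi> a b. if a = 1 \<and> b = 1 then 1 else 0)"
  by (simp add: proj_def ket_def vec_eq_iff)

lemma mm3: "((A::complex^3^3) ** B) $ i $ j = A$i$1 * B$1$j + A$i$2 * B$2$j + A$i$3 * B$3$j"
  by (simp add: matrix_matrix_mult_def sum_3)

lemma meas1_entry: "meas 1 r $ k $ l = (if (k = 1) = (l = 1) then r $ k $ l else 0)"
  using exhaust_3[of k] exhaust_3[of l]
  by (auto simp add: meas_def proj1_eq mm3 mat_def)
lemma rho_entry: "(U ** proj 1 ** cadj U) $ k $ l = U$k$1 * cnj (U$l$1)"
  by (simp add: mm3 proj1_eq cadj_def)

lemma sand22: "(U2 ** M ** cadj U2) $ 2 $ 2 = (\<Sum>k\<in>UNIV. \<Sum>l\<in>UNIV. U2$2$k * M$k$l * cnj (U2$2$l))"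
  apply (simp add: matrix_matrix_mult_def cadj_def sum_distrib_right)
  by (rule sum.swap)

lemma Pprob_formula:
  "Pprob U1 U2 = complex_of_real ((cmod (U2$2$1))^2 * (cmod (U1$1$1))^2)
     + complex_of_real ((cmod (U2$2$2*U1$2$1 + U2$2$3*U1$3$1))^2)"
  unfolding complex_norm_square of_real_mult Pprob_def sand22
  apply (simp add: sum_3 meas1_entry rho_entry)
  by (simp add: algebra_simps)

lemma sums_chi2:
  assumes "\<And>i j. (\<lambda>n. f n i j) sums s i j"
  shows "(\<lambda>n. (\<chi> i j. f n i j) :: cmat3) sums (\<chi> i j. s i j)"
proof -
  have e: "(\<Sum>k<n. (\<chi> i j. f k i j) :: cmat3) = (\<chi> i j. \<Sum>k<n. f k i j)" for n
    by (simp add: vec_eq_iff)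
  show ?thesis unfolding sums_def e
    using assms unfolding sums_def by (intro tendsto_vec_lambda) auto
qed

lemma mexp_chi:
  assumes "\<And>i j. (\<lambda>n. ((1 / fact n) *\<^sub>R mpow A n) $ i $ j) sums s i j"
  shows "mexp A = (\<chi> i j. s i j)"
proof -
  have eq: "(\<lambda>n. (\<chi> i j. ((1 / fact n) *\<^sub>R mpow A n) $ i $ j) :: cmat3) = (\<lambda>n. (1 / fact n) *\<^sub>R mpow A n)"
    by (rule ext) (simp only: vec_lambda_eta)
  have "(\<lambda>n. (1 / fact n) *\<^sub>R mpow A n) sums (\<chi> i j. s i j)"
    using sums_chi2[of "\<lambda>n i j. ((1 / fact n) *\<^sub>R mpow A n) $ i $ j" s] assms unfolding eq by blast
  thus ?thesis unfolding mexp_def by (rule sums_unique[symmetric])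
qed

definition Dg :: "(3 \<Rightarrow> complex) \<Rightarrow> cmat3" where "Dg d = (\<chi> i j. if i = j then d i else 0)"

lemma Dg_mult: "Dg a ** Dg b = Dg (\<lambda>i. a i * b i)"
  unfolding Dg_def vec_eq_iff mm3 using exhaust_3 by auto

lemma mpow_Dg: "mpow (Dg d) n = Dg (\<lambda>i. d i ^ n)"
proof (induction n)
  case 0 show ?case by (simp add: Dg_def mat_def vec_eq_iff)
next
  case (Suc n) thus ?case by (simp add: Dg_mult)
qed

lemma mexp_Dg: "mexp (Dg d) = Dg (\<lambda>i. exp (d i))"
proof -
  have "mexp (Dg d) = (\<chi> i j. if i = j then exp (d i) else 0)"
  proof (rule mexp_chi)
    fix i j
    show "(\<lambda>n. ((1 / fact n) *\<^sub>R mpow (Dg d) n) $ i $ j) sums (if i = j then exp (d i) else 0)"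
    proof (cases "i = j")
      case True
      have "(\<lambda>n. d i ^ n /\<^sub>R fact n) sums exp (d i)" by (rule exp_converges)
      thus ?thesis using True unfolding mpow_Dg by (simp add: Dg_def divide_inverse_commute)
    next
      case False thus ?thesis unfolding mpow_Dg by (simp add: Dg_def)
    qed
  qed
  thus ?thesis by (simp add: Dg_def)
qed

lemma cscale_mult: "cscale a A ** cscale b B = cscale (a * b) (A ** B)"
  by (simp add: cscale_def vec_eq_iff mm3 algebra_simps)

lemma mpow_cscale:
  assumes M3: "M ** (M ** M) = M"
  shows "mpow (cscale c M) n = (if n = 0 then mat 1 else if odd n then cscale (c ^ n) M else cscale (c ^ n) (M ** M))"
proof (induction n)
  case 0 show ?case by simp
next
  case (Suc n)
  show ?case
  proof (cases "n = 0")
    case True thus ?thesis by (simp add: matrix_mul_rid)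
  next
    case False
    show ?thesis
    proof (cases "odd n")
      case True thus ?thesis using False Suc by (simp add: cscale_mult)
    next
      case F2: False thus ?thesis using False Suc by (simp add: cscale_mult M3)
    qed
  qed
qed

lemma mi_pow_even: "(- \<i>) ^ (2 * k) = (- 1 :: complex) ^ k"
  by (simp add: power_mult)

lemma mi_pow_odd: "(- \<i>) ^ (Suc (2 * k)) = - \<i> * (- 1 :: complex) ^ k"
  by (simp add: power_mult)

lemma term_odd: "odd n \<Longrightarrow> (- \<i> * complex_of_real b) ^ n / of_real (fact n) = - \<i> * of_real (sin_coeff n * b ^ n)"
  by (elim oddE) (simp add: sin_coeff_def power_mult_distrib mi_pow_odd)

lemma term_even: "even n \<Longrightarrow> (- \<i> * complex_of_real b) ^ n / of_real (fact n) = of_real (cos_coeff n * b ^ n)"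
  by (elim evenE) (simp add: cos_coeff_def power_mult_distrib mi_pow_even)


lemma mexp_cscale:
  assumes M3: "M ** (M ** M) = M"
  shows "mexp (cscale (- \<i> * complex_of_real b) M) =
     (\<chi> i j. mat 1 $ i $ j + (- \<i> * of_real (sin b)) * M $ i $ j + of_real (cos b - 1) * (M ** M) $ i $ j)"
proof (rule mexp_chi)
  fix i j
  let ?c = "- \<i> * complex_of_real b"
  define T where "T n = (if n = 0 then mat 1 $ i $ j else 0) + (- \<i> * of_real (sin_coeff n * b ^ n)) * M $ i $ j
      + of_real (cos_coeff n * b ^ n - (if n = 0 then 1 else 0)) * (M ** M) $ i $ j" for n
  have eq: "((1 / fact n) *\<^sub>R mpow (cscale ?c M) n) $ i $ j = T n" for n
  proof (cases "n = 0")
    case True thus ?thesis by (simp add: T_def sin_coeff_def cos_coeff_def)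
  next
    case False
    show ?thesis
    proof (cases "odd n")
      case True
      have "cos_coeff n = 0" using True by (simp add: cos_coeff_def)
      moreover have "mpow (cscale ?c M) n = cscale (?c ^ n) M" using mpow_cscale[OF M3] True False by simp
      moreover have "((1 / fact n) *\<^sub>R cscale (?c ^ n) M) $ i $ j = (?c ^ n / of_real (fact n)) * M $ i $ j"
        apply (simp add: cscale_def) by (simp add: scaleR_conv_of_real)
      ultimately have "((1 / fact n) *\<^sub>R mpow (cscale ?c M) n) $ i $ j = (?c ^ n / of_real (fact n)) * M $ i $ j"
        by simp
      also have "\<dots> = T n" unfolding term_odd[OF True] using False \<open>cos_coeff n = 0\<close> by (simp add: T_def)
      finally show ?thesis .
    next
      case F2: False
      have "sin_coeff n = 0" using F2 by (simp add: sin_coeff_def)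
      moreover have "mpow (cscale ?c M) n = cscale (?c ^ n) (M ** M)" using mpow_cscale[OF M3] F2 False by simp
      moreover have "((1 / fact n) *\<^sub>R cscale (?c ^ n) (M ** M)) $ i $ j = (?c ^ n / of_real (fact n)) * (M ** M) $ i $ j"
        apply (simp add: cscale_def) by (simp add: scaleR_conv_of_real)
      ultimately have "((1 / fact n) *\<^sub>R mpow (cscale ?c M) n) $ i $ j = (?c ^ n / of_real (fact n)) * (M ** M) $ i $ j"
        by simp
      also have "\<dots> = T n" unfolding term_even[of n b, OF F2[simplified]] using False \<open>sin_coeff n = 0\<close> by (simp add: T_def)
      finally show ?thesis .
    qed
  qed
  have s0: "(\<lambda>n. if n = 0 then mat 1 $ i $ j else (0::complex)) sums mat 1 $ i $ j"
    using sums_single[of 0 "\<lambda>_. mat 1 $ i $ j :: complex"] by simp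
  have s1: "(\<lambda>n. complex_of_real (sin_coeff n * b ^ n)) sums of_real (sin b)"
    using sums_of_real[OF sin_converges[of b]] by simp
  have s2': "(\<lambda>n. cos_coeff n * b ^ n - (if n = 0 then 1 else 0)) sums (cos b - 1)"
    using sums_diff[OF cos_converges[of b] sums_single[of 0 "\<lambda>_. 1::real"]] by simp
  have s2: "(\<lambda>n. complex_of_real (cos_coeff n * b ^ n - (if n = 0 then 1 else 0))) sums of_real (cos b - 1)"
    using sums_of_real[OF s2'] by simp
  have "T sums (mat 1 $ i $ j + (- \<i> * of_real (sin b)) * M $ i $ j + of_real (cos b - 1) * (M ** M) $ i $ j)"
    unfolding T_def
    by (intro sums_add s0 sums_mult2 sums_mult s1 s2)
  thus "(\<lambda>n. ((1 / fact n) *\<^sub>R mpow (cscale ?c M) n) $ i $ j) sums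
     (mat 1 $ i $ j + (- \<i> * of_real (sin b)) * M $ i $ j + of_real (cos b - 1) * (M ** M) $ i $ j)"
    unfolding eq .
qed



lemma sqrt2_sq: "complex_of_real (sqrt 2) * complex_of_real (sqrt 2) = 2"
proof -
  have "complex_of_real (sqrt 2) * complex_of_real (sqrt 2) = complex_of_real (sqrt 2 * sqrt 2)"
    by (simp only: of_real_mult)
  also have "\<dots> = 2" by simp
  finally show ?thesis .
qed

lemma sqrt2_c: "(1 / complex_of_real (sqrt 2)) * (1 / complex_of_real (sqrt 2)) = 1 / 2"
proof -
  have "complex_of_real (sqrt 2) * complex_of_real (sqrt 2) = 2" by (rule sqrt2_sq)
  thus ?thesis by (simp add: field_simps)
qed

definition J2 :: cmat3 where
  "J2 = (\<chi> i j. if i = j then (if i = 2 then 1 else 1/2) else if (i = 1 \<and> j = 3) \<or> (i = 3 \<and> j = 1) then - 1/2 else 0)"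

lemma Jy_sq: "Jy ** Jy = J2"
  unfolding vec_eq_iff forall_3 mm3 by (simp add: Jy_def J2_def sqrt2_c sqrt2_sq)

lemma Jy_cube: "Jy ** (Jy ** Jy) = Jy"
  unfolding Jy_sq vec_eq_iff forall_3 mm3 by (simp add: Jy_def J2_def sqrt2_c sqrt2_sq)

lemma Dg_sand: "(Dg u ** A ** Dg v) $ i $ j = u i * A $ i $ j * v j"
  unfolding Dg_def mm3 using exhaust_3[of i] exhaust_3[of j] by auto

lemma Jz_Dg: "cscale c Jz = Dg (\<lambda>k. c * Jz $ k $ k)"
  unfolding Dg_def cscale_def Jz_def vec_eq_iff by auto

definition dmat :: "real \<Rightarrow> cmat3" where "dmat b = mexp (cscale (- \<i> * complex_of_real b) Jy)"

lemma Zrot_entry: "Zrot a b g $ i $ j = exp (- \<i> * of_real a * Jz $ i $ i) * dmat b $ i $ j * exp (- \<i> * of_real g * Jz $ j $ j)"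
  unfolding Zrot_def Jz_Dg mexp_Dg dmat_def[symmetric] Dg_sand ..

lemma dmat_entry: "dmat b $ i $ j = mat 1 $ i $ j + (- \<i> * of_real (sin b)) * Jy $ i $ j + of_real (cos b - 1) * J2 $ i $ j"
  unfolding dmat_def mexp_cscale[OF Jy_cube] Jy_sq by simp


lemma Jz_diag[simp]: "Jz $ 1 $ 1 = 1" "Jz $ 2 $ 2 = 0" "Jz $ 3 $ 3 = -1"
  by (simp_all add: Jz_def)

lemma dmat_vals:
  "dmat b $ 1 $ 1 = of_real ((1 + cos b) / 2)"
  "dmat b $ 2 $ 1 = of_real (sin b / sqrt 2)"
  "dmat b $ 3 $ 1 = of_real ((1 - cos b) / 2)"
  "dmat b $ 2 $ 2 = of_real (cos b)"
  "dmat b $ 2 $ 3 = of_real (- sin b / sqrt 2)"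
  by (simp_all add: dmat_entry Jy_def J2_def mat_def field_simps)

lemma cmod_exp_i: "cmod (exp (\<i> * of_real t)) = 1"
  by (rule norm_exp_i_times)

lemma cmod_sq_form: "(cmod (of_real p + of_real q * exp (\<i> * of_real t)))^2 = (p + q * cos t)^2 + (q * sin t)^2"
  by (simp add: cmod_power2 exp_Euler cos_of_real sin_of_real)

lemma U_sum_form:
  "Zrot a2 b2 g2 $ 2 $ 2 * Zrot a1 b1 g1 $ 2 $ 1 + Zrot a2 b2 g2 $ 2 $ 3 * Zrot a1 b1 g1 $ 3 $ 1
   = exp (\<i> * of_real (- g1)) * (of_real (cos b2 * sin b1 / sqrt 2)
       + of_real (- (sin b2 * (1 - cos b1) / (2 * sqrt 2))) * exp (\<i> * of_real (g2 + a1)))"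
  apply (simp add: Zrot_entry dmat_vals)
  apply (simp add: exp_add[symmetric] algebra_simps)
  done




lemma hid0:
  fixes x w :: real
  shows "16 * (3/50*(9+w) - (1-x^2)/2) * (3/50*(9+w) - (1+x^2)/4) - (1-x^2)*(1-x)^2
     - (x - (1-w)/5)^2 * ((2*w - 12)/5 * x + (13+32*w)/25 - x^2)
     = (w*w - 6) * (-2/125 * x * w - 32/625 * w + 87/625 - 3/25 * x^2 - 48/125 * x)"
  by (simp add: field_simps power2_eq_square)

lemma s6_lo: "sqrt 6 > 2.4" by (rule real_less_rsqrt) (simp add: power2_eq_square)
lemma s6_hi: "sqrt 6 < 2.5" by (rule real_less_lsqrt) (simp_all add: power2_eq_square)
lemma s6_sq: "sqrt 6 * sqrt 6 = 6" by simp

definition KK :: real where "KK = 3/50*(9 + sqrt 6)"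

lemma h_id: "16 * (KK - (1-x^2)/2) * (KK - (1+x^2)/4) - (1-x^2)*(1-x)^2
     = (x - (1 - sqrt 6)/5)^2 * ((2* sqrt 6 - 12)/5 * x + (13+32* sqrt 6)/25 - x^2)"
proof -
  have "16 * (KK - (1-x^2)/2) * (KK - (1+x^2)/4) - (1-x^2)*(1-x)^2
     - (x - (1 - sqrt 6)/5)^2 * ((2 * sqrt 6 - 12)/5 * x + (13+32 * sqrt 6)/25 - x^2) = 0"
    using hid0[where x=x and w="sqrt 6"] unfolding KK_def by (simp only: s6_sq) simp
  thus ?thesis by simp
qed

lemma r_nonneg: "-1 \<le> x \<Longrightarrow> x \<le> 1 \<Longrightarrow> (2* sqrt 6 - 12)/5 * x + (13+32* sqrt 6)/25 - x^2 \<ge> 0"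
proof -
  assume a: "-1 \<le> x" "x \<le> 1"
  have "(1-x)*(1+x) \<ge> 0" using a by (intro mult_nonneg_nonneg) auto
  hence "x^2 \<le> 1" by (simp add: power2_eq_square algebra_simps)
  moreover have "(2* sqrt 6 - 12)/5 * x \<ge> (2* sqrt 6 - 12)/5" using a s6_hi
    by (intro mult_left_mono_neg[of x 1, simplified]) auto
  moreover have "(2 * sqrt 6 - 12)/5 + (13+32 * sqrt 6)/25 - 1 \<ge> 0" using s6_lo by (simp add: field_simps)
  ultimately show ?thesis by (smt (verit))
qed

lemma h_nonneg: "-1 \<le> x \<Longrightarrow> x \<le> 1 \<Longrightarrow> 16 * (KK - (1-x^2)/2) * (KK - (1+x^2)/4) - (1-x^2)*(1-x)^2 \<ge> 0"
  unfolding h_id using r_nonneg by simp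

lemma KK_gt: "KK > 1/2" unfolding KK_def using s6_lo by simp

lemma quad_id: "(K - A) * (K * (a^2 + b^2) - (A * a^2 + C * b^2 + 2 * B * a * b))
   = ((K - A) * a - B * b)^2 + ((K - A) * (K - C) - B^2) * b^2" for K A C B a b :: real
  by (simp add: algebra_simps power2_eq_square)


lemma bound_core:
  fixes x t a b :: real
  assumes x: "-1 \<le> x" "x \<le> 1" and t: "t\<^sup>2 = 1 - x\<^sup>2" and ab: "a\<^sup>2 + b\<^sup>2 = 1"
  shows "(1-x^2)/2 * a^2 + (1+x^2)/4 * b^2 + 2 * (t*(1-x)/4) * a * b \<le> KK"
    and "x = (1 - sqrt 6)/5 \<Longrightarrow> (KK - (1-x^2)/2) * a = (t*(1-x)/4) * b \<Longrightarrow>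
         (1-x^2)/2 * a^2 + (1+x^2)/4 * b^2 + 2 * (t*(1-x)/4) * a * b = KK"
proof -
  let ?A = "(1-x^2)/2" and ?C = "(1+x^2)/4" and ?B = "t*(1-x)/4"
  let ?G = "?A * a^2 + ?C * b^2 + 2 * ?B * a * b"
  have q: "(KK - ?A) * (KK - ?G) = ((KK - ?A) * a - ?B * b)^2 + ((KK - ?A) * (KK - ?C) - ?B^2) * b^2"
    using quad_id[of KK ?A a b ?C ?B] ab by simp
  have B2: "?B^2 = (1-x^2)*(1-x)^2/16" using t by (simp add: power_mult_distrib power_divide)
  have hh: "(KK - ?A) * (KK - ?C) - ?B^2 = (16 * (KK - (1-x^2)/2) * (KK - (1+x^2)/4) - (1-x^2)*(1-x)^2) / 16"
    unfolding B2 by (simp add: field_simps)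
  have hn: "(KK - ?A) * (KK - ?C) - ?B^2 \<ge> 0" unfolding hh using h_nonneg[OF x] by simp
  have x2: "x^2 \<ge> 0" by simp
  have "?A \<le> 1/2" using x2 by simp
  hence Apos: "KK - ?A > 0" using KK_gt by linarith
  have "(KK - ?A) * (KK - ?G) \<ge> 0" unfolding q using hn by simp
  thus "?G \<le> KK" using Apos by (simp add: zero_le_mult_iff)
  assume xs: "x = (1 - sqrt 6)/5" and e: "(KK - ?A) * a = ?B * b"
  have "16 * (KK - (1-x^2)/2) * (KK - (1+x^2)/4) - (1-x^2)*(1-x)^2 = 0"
    unfolding h_id xs by simp
  hence "(KK - ?A) * (KK - ?C) - ?B^2 = 0" unfolding hh by simp
  hence "(KK - ?A) * (KK - ?G) = 0" unfolding q using e by simp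
  thus "?G = KK" using Apos by simp
qed

definition Fv :: "real \<Rightarrow> real \<Rightarrow> real \<Rightarrow> real" where
  "Fv b1 b2 th = (sin b2 / sqrt 2)^2 * ((1 + cos b1)/2)^2
     + (cos b2 * sin b1 / sqrt 2 + - (sin b2 * (1 - cos b1) / (2 * sqrt 2)) * cos th)^2
     + (- (sin b2 * (1 - cos b1) / (2 * sqrt 2)) * sin th)^2"

lemma Fv_simp: "Fv b1 b2 th = (sin b2)^2 * (1 + cos b1)^2 / 8 + (cos b2)^2 * (sin b1)^2 / 2
   - cos b2 * sin b1 * sin b2 * (1 - cos b1) * cos th / 2 + (sin b2)^2 * (1 - cos b1)^2 / 8"
proof -
  have s2: "sqrt 2 ^ 2 = 2" by simp
  have e: "(sin th)^2 = 1 - (cos th)^2" by (simp add: sin_squared_eq)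
  show ?thesis unfolding Fv_def power_mult_distrib e
    by (simp add: power_divide s2 field_simps power2_eq_square)
qed


lemma Fv_le: "Fv b1 b2 th \<le> KK"
proof -
  define x where "x = cos b1"
  define y where "y = sin b1"
  define c where "c = cos b2"
  define sv where "sv = sin b2"
  define u where "u = cos th"
  have xy: "y^2 = 1 - x^2" unfolding x_def y_def by (simp add: sin_squared_eq)
  have cs: "\<bar>c\<bar>^2 + \<bar>sv\<bar>^2 = 1" unfolding c_def sv_def by simp
  have x1: "-1 \<le> x" "x \<le> 1" unfolding x_def by simp_all
  have t: "\<bar>y\<bar>^2 = 1 - x^2" using xy by simp
  have u1: "\<bar>u\<bar> \<le> 1" unfolding u_def by simp
  have "\<bar>c*y* sv*u\<bar> \<le> \<bar>c\<bar>*\<bar>y\<bar>*\<bar>sv\<bar>"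
    using u1 by (simp add: abs_mult mult_left_le)
  hence m: "- (c*y* sv*u) \<le> \<bar>c\<bar>*\<bar>y\<bar>*\<bar>sv\<bar>" by linarith
  have "- (c*y* sv*u) * ((1-x)/2) \<le> \<bar>c\<bar>*\<bar>y\<bar>*\<bar>sv\<bar> * ((1-x)/2)"
    using m x1 by (intro mult_right_mono) auto
  moreover have "Fv b1 b2 th = sv^2 * (1 + x^2) / 4 + c^2 * (1 - x^2) / 2 + (- (c*y* sv*u)) * ((1-x)/2)"
    unfolding Fv_simp x_def[symmetric] y_def[symmetric] c_def[symmetric] sv_def[symmetric] u_def[symmetric]
    unfolding xy by (simp add: field_simps power2_eq_square)
  moreover have "(1-x^2)/2 * \<bar>c\<bar>^2 + (1+x^2)/4 * \<bar>sv\<bar>^2 + 2 * (\<bar>y\<bar>*(1-x)/4) * \<bar>c\<bar> * \<bar>sv\<bar> \<le> KK"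
    by (rule bound_core(1)[OF x1 t cs])
  ultimately show ?thesis by (simp add: field_simps)
qed


lemma Fv_attain: "\<exists>b1 b2. Fv b1 b2 pi = KK"
proof -
  define x where "x = (1 - sqrt 6)/5"
  have x1: "-1 \<le> x" "x \<le> 1" unfolding x_def using s6_lo s6_hi by simp_all
  have "(1-x)*(1+x) \<ge> 0" using x1 by (intro mult_nonneg_nonneg) auto
  hence x2: "1 - x^2 \<ge> 0" by (simp add: power2_eq_square algebra_simps)
  define y where "y = sqrt (1 - x^2)"
  have y2: "y^2 = 1 - x^2" unfolding y_def using x2 by simp
  have y0: "y \<ge> 0" unfolding y_def using x2 by simp
  define A where "A = (1-x^2)/2"
  define B where "B = y*(1-x)/4"
  have "x^2 \<ge> 0" by simp
  hence "A \<le> 1/2" unfolding A_def by simp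
  hence Apos: "KK - A > 0" using KK_gt by linarith
  define N where "N = sqrt (B^2 + (KK - A)^2)"
  have N2: "N^2 = B^2 + (KK - A)^2" unfolding N_def by simp
  have Npos: "N > 0" unfolding N_def using Apos by (simp add: add_nonneg_pos)
  obtain b1 where b1: "x = cos b1" "y = sin b1"
    using sincos_total_2pi[of x y] y2 by auto
  have D: "B^2 + (KK-A)^2 > 0" using Apos by (simp add: add_nonneg_pos)
  have cs2: "(B/N)^2 + ((KK-A)/N)^2 = 1" using N2 D Apos by (simp add: power_divide add_divide_distrib[symmetric])
  define c0 where "c0 = B/N"
  define s0 where "s0 = (KK-A)/N"
  have cs3: "c0^2 + s0^2 = 1" using cs2 unfolding c0_def s0_def .
  obtain b2 where b2: "c0 = cos b2" "s0 = sin b2"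
    using sincos_total_2pi[OF cs3] by auto
  have eqc: "(KK - (1-x^2)/2) * c0 = (y*(1-x)/4) * s0"
    unfolding A_def B_def c0_def s0_def by (simp add: field_simps)
  have G: "(1-x^2)/2 * c0^2 + (1+x^2)/4 * s0^2 + 2 * (y*(1-x)/4) * c0 * s0 = KK"
    using bound_core(2)[OF x1 y2 cs3 x_def eqc] .
  have "Fv b1 b2 pi = s0^2 * (1 + x^2) / 4 + c0^2 * (1 - x^2) / 2 + c0 * y * s0 * (1-x) / 2"
    unfolding Fv_simp b1[symmetric] b2[symmetric] cos_pi y2
    by (simp add: field_simps power2_eq_square)
  also have "\<dots> = KK" using G by (simp add: field_simps)
  finally show ?thesis by blast
qed



lemma cmod_exp_mi: "cmod (exp (- (\<i> * complex_of_real a))) = 1"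
  using norm_exp_i_times[of "-a"] by simp

lemma cmod_1r: "(cmod (1 + complex_of_real r))^2 = (1 + r)^2"
proof -
  have "1 + complex_of_real r = complex_of_real (1 + r)" by simp
  hence "cmod (1 + complex_of_real r) = \<bar>1 + r\<bar>" by (simp only: norm_of_real)
  thus ?thesis by simp
qed

lemma Pprob_Zrot: "Pprob (Zrot a1 b1 g1) (Zrot a2 b2 g2) = complex_of_real (Fv b1 b2 (g2 + a1))"
proof -
  have e1: "(cmod (Zrot a2 b2 g2 $ 2 $ 1))^2 = (sin b2 / sqrt 2)^2"
    by (simp add: Zrot_entry dmat_vals norm_mult norm_divide cmod_exp_mi power_divide)
  have e2: "(cmod (Zrot a1 b1 g1 $ 1 $ 1))^2 = ((1 + cos b1)/2)^2"
    by (simp add: Zrot_entry dmat_vals norm_mult norm_divide cmod_exp_mi power_divide cmod_1r)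
  have e3: "(cmod (Zrot a2 b2 g2 $ 2 $ 2 * Zrot a1 b1 g1 $ 2 $ 1 + Zrot a2 b2 g2 $ 2 $ 3 * Zrot a1 b1 g1 $ 3 $ 1))^2
     = (cos b2 * sin b1 / sqrt 2 + - (sin b2 * (1 - cos b1) / (2 * sqrt 2)) * cos (g2 + a1))^2
       + (- (sin b2 * (1 - cos b1) / (2 * sqrt 2)) * sin (g2 + a1))^2"
    unfolding U_sum_form norm_mult cmod_exp_i mult_1 cmod_sq_form ..
  show ?thesis unfolding Pprob_formula e1 e2 e3 Fv_def by simp
qed

theorem corollary1:
  shows "(\<forall>U1\<in>Rset. \<forall>U2\<in>Rset. Im (Pprob U1 U2) = 0)
       \<and> (\<exists>U1\<in>Rset. \<exists>U2\<in>Rset. Re (Pprob U1 U2) = 3 / 50 * (9 + sqrt 6))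
       \<and> (\<forall>U1\<in>Rset. \<forall>U2\<in>Rset. Re (Pprob U1 U2) \<le> 3 / 50 * (9 + sqrt 6))
       \<and> 3 / 50 * (9 + sqrt 6) = 0.004 * (sqrt (393 - 48 * sqrt 6) + 138 + 7 * sqrt 6)"
proof (intro conjI)
  show "\<forall>U1\<in>Rset. \<forall>U2\<in>Rset. Im (Pprob U1 U2) = 0"
    unfolding Rset_def by (auto simp: Pprob_Zrot)
  show "\<forall>U1\<in>Rset. \<forall>U2\<in>Rset. Re (Pprob U1 U2) \<le> 3 / 50 * (9 + sqrt 6)"
    unfolding Rset_def using Fv_le unfolding KK_def by (auto simp: Pprob_Zrot)
  obtain b1 b2 where "Fv b1 b2 pi = KK" using Fv_attain by blast
  hence "Re (Pprob (Zrot 0 b1 0) (Zrot 0 b2 pi)) = 3 / 50 * (9 + sqrt 6)"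
    by (simp add: Pprob_Zrot KK_def)
  moreover have "Zrot 0 b1 0 \<in> Rset" "Zrot 0 b2 pi \<in> Rset" unfolding Rset_def by blast+
  ultimately show "\<exists>U1\<in>Rset. \<exists>U2\<in>Rset. Re (Pprob U1 U2) = 3 / 50 * (9 + sqrt 6)" by blast
  have "(8 * sqrt 6 - 3)^2 = 393 - 48 * sqrt 6"
    by (simp add: power2_eq_square algebra_simps)
  moreover have "8 * sqrt 6 - 3 \<ge> 0" using s6_lo by simp
  ultimately have "sqrt (393 - 48 * sqrt 6) = 8 * sqrt 6 - 3"
    by (metis real_sqrt_abs abs_of_nonneg)
  thus "3 / 50 * (9 + sqrt 6) = 0.004 * (sqrt (393 - 48 * sqrt 6) + 138 + 7 * sqrt 6)"
    by simp
qed

end
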